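(* Let $d,T,\tau\ge1$ be integers and $\beta\in(0,1)$, and assume $L:=2T\tau/\beta\ge e$. Let $\sigma>0$ satisfy $$\sigma\sqrt{2\log L}\le\tfrac12 \qquad\text{and}\qquad 5\sigma^2 d\log L\le\frac{1}{\log L}.$$ Consider the random process in $\mathbb{R}^d$ given by $x^{(1)}=0$ and $$x^{(t+1)}=x^{(t)}+u^{(t)}+\eta^{(t)}\qquad (t=1,\dots,T-1),$$ where: - $u^{(t)}$ is a vector determined by $\eta^{(1)},\dots,\eta^{(t-1)}$ (that is, measurable with respect to the history up to step $t$) with $\|u^{(t)}\|_2\le1$ and $\langle x^{(t)},u^{(t)}\rangle\le0$; - $\eta^{(t)}\sim N(0,\sigma^2 I_d)$ is independent of $\eta^{(1)},\dots,\eta^{(t-1)}$. Then $$\Pr\left[\|x^{(t)}\|_2\le10\sqrt{t}\ \text{ for all } t\le T\right]\ge1-\frac{2\beta}{\tau}.$$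
   Context: $N(0,\sigma^2 I_d)$ is the centered Gaussian distribution on $\mathbb{R}^d$ with covariance $\sigma^2 I_d$. $\log$ is the natural logarithm. *)

theory Defs
  imports "HOL-Probability.Probability"
begin

definition iso_gauss_density :: "real \<Rightarrow> real ^ 'd \<Rightarrow> real" where
  "iso_gauss_density \<sigma> v = (\<Prod>i\<in>UNIV. normal_density 0 \<sigma> (v $ i))"

end

theory Submission
  imports Defs
begin


lemma nn_integral_normal_density_1:
  assumes "\<sigma> > 0"
  shows "(\<integral>\<^sup>+y. ennreal (normal_density \<mu> \<sigma> y) \<partial>lborel) = 1"
proof -
  interpret prob_space "density lborel (\<lambda>y. ennreal (normal_density \<mu> \<sigma> y))"
    using assms by (rule prob_space_normal_density)
  have "emeasure (density lborel (\<lambda>y. ennreal (normal_density \<mu> \<sigma> y))) UNIV = 1"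
    using emeasure_space_1 by simp
  then show ?thesis by (simp add: emeasure_density)
qed

lemma gauss1:
  fixes \<sigma> l b a :: real
  assumes s: "\<sigma> > 0" and a: "a = 1 - 2*l*\<sigma>\<^sup>2" "a > 0"
  shows "(\<integral>\<^sup>+y. ennreal (exp (l*y\<^sup>2 + b*y) * normal_density 0 \<sigma> y) \<partial>lborel)
     = ennreal (exp (b\<^sup>2*\<sigma>\<^sup>2/(2*a)) / sqrt a)"
proof -
  define sd where "sd = \<sigma> / sqrt a"
  define m where "m = b*\<sigma>\<^sup>2/a"
  define K where "K = exp (b\<^sup>2*\<sigma>\<^sup>2/(2*a)) / sqrt a"
  have sd2: "sd\<^sup>2 = \<sigma>\<^sup>2 / a" using a by (simp add: sd_def power_divide)
  have pt: "exp (l*y\<^sup>2 + b*y) * normal_density 0 \<sigma> y = K * normal_density m sd y" for y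
  proof -
    have e: "l*y\<^sup>2 + b*y + (-(y - 0)\<^sup>2/(2*\<sigma>\<^sup>2)) = b\<^sup>2*\<sigma>\<^sup>2/(2*a) + (-(y - m)\<^sup>2/(2* sd\<^sup>2))"
    proof -
      have r1: "b\<^sup>2*\<sigma>\<^sup>2/(2*a) + (-(y - m)\<^sup>2/(2* sd\<^sup>2)) = -a*y\<^sup>2/(2*\<sigma>\<^sup>2) + b*y"
        using s a(2) unfolding sd2 m_def by (simp add: field_simps power2_eq_square)
      have r2: "l*y\<^sup>2 + b*y + (-(y - 0)\<^sup>2/(2*\<sigma>\<^sup>2)) = -a*y\<^sup>2/(2*\<sigma>\<^sup>2) + b*y"
        using s unfolding a(1) by (simp add: field_simps power2_eq_square)
      show ?thesis using r1 r2 by simp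
    qed
    have r: "1 / sqrt (2*pi* sd\<^sup>2) = sqrt a * (1 / sqrt (2*pi*\<sigma>\<^sup>2))"
      using s a unfolding sd2 by (simp add: real_sqrt_divide field_simps real_sqrt_mult)
    have "exp (l*y\<^sup>2 + b*y) * normal_density 0 \<sigma> y
        = 1 / sqrt (2*pi*\<sigma>\<^sup>2) * exp (l*y\<^sup>2 + b*y + (-(y - 0)\<^sup>2/(2*\<sigma>\<^sup>2)))"
      unfolding normal_density_def exp_add by simp
    also have "\<dots> = 1 / sqrt (2*pi*\<sigma>\<^sup>2) * exp (b\<^sup>2*\<sigma>\<^sup>2/(2*a)) * exp (-(y - m)\<^sup>2/(2* sd\<^sup>2))"
      unfolding e exp_add by simp
    also have "\<dots> = K * normal_density m sd y"
      unfolding normal_density_def K_def r using a by (simp add: field_simps)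
    finally show ?thesis .
  qed
  have K0: "K \<ge> 0" unfolding K_def using a by simp
  have "(\<integral>\<^sup>+y. ennreal (exp (l*y\<^sup>2 + b*y) * normal_density 0 \<sigma> y) \<partial>lborel)
      = (\<integral>\<^sup>+y. ennreal K * ennreal (normal_density m sd y) \<partial>lborel)"
    unfolding pt using K0 by (simp add: ennreal_mult normal_density_nonneg)
  also have "\<dots> = ennreal K * (\<integral>\<^sup>+y. ennreal (normal_density m sd y) \<partial>lborel)"
    by (rule nn_integral_cmult) simp
  also have "\<dots> = ennreal K" using s a by (subst nn_integral_normal_density_1) (simp_all add: sd_def)
  finally show ?thesis unfolding K_def .
qed


lemma Basis_vec_range: "(Basis :: (real^'d) set) = range (\<lambda>i. axis i 1)"
  by (auto simp: Basis_vec_def)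

lemma inj_axis1: "inj (\<lambda>i::'d::finite. axis i (1::real))"
  by (auto simp: inj_def axis_eq_axis)

lemma prod_Basis_vec:
  fixes g :: "real^'d \<Rightarrow> 'b::comm_monoid_mult"
  shows "(\<Prod>b\<in>Basis. g b) = (\<Prod>i\<in>UNIV. g (axis i 1))"
  unfolding Basis_vec_range by (subst prod.reindex[OF inj_axis1]) simp

lemma iso_gauss_density_measurable[measurable]:
  "iso_gauss_density \<sigma> \<in> borel_measurable lborel"
  unfolding iso_gauss_density_def by measurable

lemma iso_gauss_density_nonneg: "0 \<le> iso_gauss_density \<sigma> y"
  unfolding iso_gauss_density_def by (simp add: prod_nonneg normal_density_nonneg)

lemma gaussd:
  fixes v :: "real^'d" and \<sigma> l a :: real
  assumes s: "\<sigma> > 0" and a: "a = 1 - 2*l*\<sigma>\<^sup>2" "a > 0"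
  shows "(\<integral>\<^sup>+y. ennreal (exp (l*(norm y)\<^sup>2 + 2*l*(v \<bullet> y))) \<partial>density lborel (\<lambda>y. ennreal (iso_gauss_density \<sigma> y)))
     = ennreal (\<Prod>i\<in>UNIV. exp ((2*l*(v$i))\<^sup>2*\<sigma>\<^sup>2/(2*a)) / sqrt a)"
proof -
  define f where "f b t = exp (l*t\<^sup>2 + (2*l*(v \<bullet> b))*t) * normal_density 0 \<sigma> t" for b :: "real^'d" and t
  have f0: "0 \<le> f b t" for b t unfolding f_def by (simp add: normal_density_nonneg)
  have pt: "iso_gauss_density \<sigma> y * exp (l*(norm y)\<^sup>2 + 2*l*(v \<bullet> y)) = (\<Prod>b\<in>Basis. f b (y \<bullet> b))" for y
  proof -
    have n: "(norm y)\<^sup>2 = (\<Sum>i\<in>UNIV. (y$i)\<^sup>2)"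
      by (simp add: norm_vec_def L2_set_def sum_nonneg)
    have iv: "v \<bullet> y = (\<Sum>i\<in>UNIV. v$i * y$i)" by (simp add: inner_vec_def)
    have "l*(norm y)\<^sup>2 + 2*l*(v \<bullet> y) = (\<Sum>i\<in>UNIV. l*(y$i)\<^sup>2 + (2*l*(v$i))*(y$i))"
      unfolding n iv by (simp add: sum.distrib sum_distrib_left algebra_simps)
    then have "exp (l*(norm y)\<^sup>2 + 2*l*(v \<bullet> y)) = (\<Prod>i\<in>UNIV. exp (l*(y$i)\<^sup>2 + (2*l*(v$i))*(y$i)))"
      by (simp add: exp_sum)
    then show ?thesis
      unfolding prod_Basis_vec f_def iso_gauss_density_def
      by (simp add: inner_axis prod.distrib[symmetric] mult.commute)
  qed
  have "(\<integral>\<^sup>+y. ennreal (exp (l*(norm y)\<^sup>2 + 2*l*(v \<bullet> y))) \<partial>density lborel (\<lambda>y. ennreal (iso_gauss_density \<sigma> y)))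
     = (\<integral>\<^sup>+y. ennreal (iso_gauss_density \<sigma> y) * ennreal (exp (l*(norm y)\<^sup>2 + 2*l*(v \<bullet> y))) \<partial>lborel)"
    by (subst nn_integral_density) auto
  also have "\<dots> = (\<integral>\<^sup>+y. (\<Prod>b\<in>Basis. f b (y \<bullet> b)) \<partial>lborel)"
    apply (rule nn_integral_cong)
    apply (subst ennreal_mult'[symmetric])
     apply (simp add: iso_gauss_density_nonneg)
    apply (simp add: pt)
    done
  also have "\<dots> = (\<integral>\<^sup>+y. (\<Prod>b\<in>Basis. ennreal (f b (y \<bullet> b))) \<partial>lborel)"
    by (simp add: prod_ennreal f0)
  also have "\<dots> = (\<Prod>b\<in>Basis. (\<integral>\<^sup>+t. f b t \<partial>lborel))"
    by (rule nn_integral_lborel_prod[where f="\<lambda>b t. ennreal (f b t)"]) (auto simp: f_def f0)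
  also have "\<dots> = (\<Prod>b\<in>Basis. ennreal (exp ((2*l*(v \<bullet> b))\<^sup>2*\<sigma>\<^sup>2/(2*a)) / sqrt a))"
    apply (rule prod.cong[OF refl])
    unfolding f_def by (rule gauss1[OF s a])
  also have "\<dots> = ennreal (\<Prod>i\<in>UNIV. exp ((2*l*(v$i))\<^sup>2*\<sigma>\<^sup>2/(2*a)) / sqrt a)"
    unfolding prod_Basis_vec using a by (simp add: inner_axis prod_ennreal[symmetric])
  finally show ?thesis .
qed


lemma inv_sqrt_le_exp:
  fixes a :: real assumes "a > 0"
  shows "1 / sqrt a \<le> exp ((1/a - 1)/2)"
proof -
  have "1/a \<le> exp (1/a - 1)" using exp_ge_add_one_self[of "1/a - 1"] by simp
  then have "sqrt (1/a) \<le> sqrt (exp (1/a - 1))" by (rule real_sqrt_le_mono)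
  also have "sqrt (exp (1/a - 1)) = exp ((1/a - 1)/2)"
  proof -
    have e: "exp (1/a - 1) = (exp ((1/a - 1)/2))\<^sup>2"
      by (simp add: power2_eq_square exp_add[symmetric])
    show ?thesis unfolding e by simp
  qed
  finally show ?thesis by (simp add: real_sqrt_divide)
qed

lemma gauss_bound:
  fixes v :: "real^'d" and \<sigma> l a B :: real
  assumes s: "\<sigma> > 0" and a: "a = 1 - 2*l*\<sigma>\<^sup>2" "a > 0" and vB: "(norm v)\<^sup>2 \<le> B"
  shows "(\<integral>\<^sup>+y. ennreal (exp (l*(norm y)\<^sup>2 + 2*l*(v \<bullet> y))) \<partial>density lborel (\<lambda>y. ennreal (iso_gauss_density \<sigma> y)))
     \<le> ennreal (exp (2*l\<^sup>2*\<sigma>\<^sup>2*B/a + real CARD('d) * ((1/a - 1)/2)))"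
proof -
  have nv: "(norm v)\<^sup>2 = (\<Sum>i\<in>UNIV. (v$i)\<^sup>2)"
    by (simp add: norm_vec_def L2_set_def sum_nonneg)
  have "(\<Prod>i\<in>UNIV. exp ((2*l*(v$i))\<^sup>2*\<sigma>\<^sup>2/(2*a)) / sqrt a)
      = (\<Prod>i\<in>UNIV. exp (2*l\<^sup>2*\<sigma>\<^sup>2*(v$i)\<^sup>2/a)) * (1 / sqrt a) ^ CARD('d)"
  proof -
    have "\<And>i. exp ((2*l*(v$i))\<^sup>2*\<sigma>\<^sup>2/(2*a)) = exp (2*l\<^sup>2*\<sigma>\<^sup>2*(v$i)\<^sup>2/a)"
      using a by (simp add: power2_eq_square field_simps)
    then show ?thesis unfolding prod_dividef by (simp add: power_one_over)
  qed
  also have "(\<Prod>i\<in>UNIV. exp (2*l\<^sup>2*\<sigma>\<^sup>2*(v$i)\<^sup>2/a)) = exp (2*l\<^sup>2*\<sigma>\<^sup>2*(norm v)\<^sup>2/a)"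
    unfolding nv by (simp add: exp_sum[symmetric] sum_distrib_left sum_divide_distrib)
  also have "exp (2*l\<^sup>2*\<sigma>\<^sup>2*(norm v)\<^sup>2/a) \<le> exp (2*l\<^sup>2*\<sigma>\<^sup>2*B/a)"
    using vB a by (simp add: divide_right_mono mult_left_mono)
  also have "(1 / sqrt a) ^ CARD('d) \<le> exp ((1/a - 1)/2) ^ CARD('d)"
    using inv_sqrt_le_exp[OF a(2)] a by (intro power_mono) auto
  also have "exp ((1/a - 1)/2) ^ CARD('d) = exp (real CARD('d) * ((1/a - 1)/2))"
    by (rule exp_of_nat_mult[symmetric])
  finally have "(\<Prod>i\<in>UNIV. exp ((2*l*(v$i))\<^sup>2*\<sigma>\<^sup>2/(2*a)) / sqrt a)
      \<le> exp (2*l\<^sup>2*\<sigma>\<^sup>2*B/a) * exp (real CARD('d) * ((1/a - 1)/2))"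
    using a by (simp add: mult_right_mono)
  then show ?thesis
    unfolding gaussd[OF s a] by (simp add: exp_add[symmetric] ennreal_leI)
qed

lemma factor:
  fixes Y :: "'w \<Rightarrow> 'a::euclidean_space"
  assumes ps: "prob_space M"
    and ind: "prob_space.indep_set M (sets (vimage_algebra (space M) Y borel))
                (sets (vimage_algebra (space M) H P))"
    and Y: "Y \<in> M \<rightarrow>\<^sub>M borel" and H: "H \<in> M \<rightarrow>\<^sub>M P"
    and F: "F \<in> borel_measurable (P \<Otimes>\<^sub>M lborel)"
  shows "(\<integral>\<^sup>+\<omega>. F (H \<omega>, Y \<omega>) \<partial>M) = (\<integral>\<^sup>+\<omega>. (\<integral>\<^sup>+y. F (H \<omega>, y) \<partial>distr M lborel Y) \<partial>M)"
proof -
  interpret prob_space M by (rule ps)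
  have Yl: "Y \<in> M \<rightarrow>\<^sub>M lborel" using Y by simp
  interpret N: prob_space "distr M lborel Y" by (rule prob_space_distr[OF Yl])
  interpret PH: prob_space "distr M P H" by (rule prob_space_distr[OF H])
  interpret pair_sigma_finite "distr M lborel Y" "distr M P H" ..
  have XY: "(\<lambda>x. (Y x, H x)) \<in> M \<rightarrow>\<^sub>M (lborel \<Otimes>\<^sub>M P)"
    by (rule measurable_Pair[OF Yl H])
  have eq: "distr M lborel Y \<Otimes>\<^sub>M distr M P H = distr M (lborel \<Otimes>\<^sub>M P) (\<lambda>x. (Y x, H x))"
  proof (rule pair_measure_eqI)
    show "sigma_finite_measure (distr M lborel Y)" ..
    show "sigma_finite_measure (distr M P H)" ..
    fix A B assume A: "A \<in> sets (distr M lborel Y)" and B: "B \<in> sets (distr M P H)"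
    have "emeasure (distr M (lborel \<Otimes>\<^sub>M P) (\<lambda>x. (Y x, H x))) (A \<times> B)
        = emeasure M ((\<lambda>x. (Y x, H x)) -` (A \<times> B) \<inter> space M)"
      using A B by (intro emeasure_distr[OF XY]) auto
    also have "(\<lambda>x. (Y x, H x)) -` (A \<times> B) \<inter> space M = (Y -` A \<inter> space M) \<inter> (H -` B \<inter> space M)"
      by auto
    also have "emeasure M \<dots> = emeasure M (Y -` A \<inter> space M) * emeasure M (H -` B \<inter> space M)"
    proof -
      have a: "Y -` A \<inter> space M \<in> sets (vimage_algebra (space M) Y borel)"
        using A by (intro in_vimage_algebra) simp
      have b: "H -` B \<inter> space M \<in> sets (vimage_algebra (space M) H P)"
        using B by (intro in_vimage_algebra) simp
      show ?thesis using indep_setD[OF ind a b]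
        by (simp add: emeasure_eq_measure measure_nonneg ennreal_mult)
    qed
    also have "\<dots> = emeasure (distr M lborel Y) A * emeasure (distr M P H) B"
      using A B Yl H by (simp add: emeasure_distr)
    finally show "emeasure (distr M lborel Y) A * emeasure (distr M P H) B
        = emeasure (distr M (lborel \<Otimes>\<^sub>M P) (\<lambda>x. (Y x, H x))) (A \<times> B)" by simp
  qed simp
  have F': "(\<lambda>(y, g). F (g, y)) \<in> borel_measurable (lborel \<Otimes>\<^sub>M P)"
    using measurable_pair_swap[OF F] by simp
  have "(\<integral>\<^sup>+\<omega>. F (H \<omega>, Y \<omega>) \<partial>M) = (\<integral>\<^sup>+z. (\<lambda>(y, g). F (g, y)) z \<partial>distr M (lborel \<Otimes>\<^sub>M P) (\<lambda>x. (Y x, H x)))"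
    by (subst nn_integral_distr) (auto intro: measurable_Pair Yl H F')
  also have "\<dots> = (\<integral>\<^sup>+z. (\<lambda>(y, g). F (g, y)) z \<partial>(distr M lborel Y \<Otimes>\<^sub>M distr M P H))"
    unfolding eq ..
  also have "\<dots> = (\<integral>\<^sup>+ g. (\<integral>\<^sup>+ y. F (g, y) \<partial>distr M lborel Y) \<partial>distr M P H)"
  proof -
    have ss: "sets (distr M lborel Y \<Otimes>\<^sub>M distr M P H) = sets (lborel \<Otimes>\<^sub>M P)"
      by (intro sets_pair_measure_cong) simp_all
    have "(\<lambda>(y, g). F (g, y)) \<in> borel_measurable (distr M lborel Y \<Otimes>\<^sub>M distr M P H)"
      using F' unfolding measurable_cong_sets[OF ss refl] .
    from nn_integral_snd[OF this] show ?thesis by simp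
  qed
  also have "\<dots> = (\<integral>\<^sup>+\<omega>. (\<integral>\<^sup>+y. F (H \<omega>, y) \<partial>distr M lborel Y) \<partial>M)"
  proof (rule nn_integral_distr[OF H])
    have "(\<lambda>g. \<integral>\<^sup>+ y. F (g, y) \<partial>distr M lborel Y) \<in> borel_measurable P"
    proof (rule N.borel_measurable_nn_integral[where f="\<lambda>g y. F (g, y)"])
      have ss2: "sets (P \<Otimes>\<^sub>M distr M lborel Y) = sets (P \<Otimes>\<^sub>M lborel)"
        by (intro sets_pair_measure_cong) simp_all
      show "(\<lambda>(g, y). F (g, y)) \<in> borel_measurable (P \<Otimes>\<^sub>M distr M lborel Y)"
        unfolding measurable_cong_sets[OF ss2 refl] using F by simp
    qed
    then show "(\<lambda>g. \<integral>\<^sup>+ y. F (g, y) \<partial>distr M lborel Y) \<in> borel_measurable (distr M P H)"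
      by simp
  qed
  finally show ?thesis .
qed


fun Xf :: "(nat \<Rightarrow> (nat \<Rightarrow> 'v::euclidean_space) \<Rightarrow> 'v) \<Rightarrow> nat \<Rightarrow> (nat \<Rightarrow> 'v) \<Rightarrow> 'v" where
  "Xf U 0 h = 0"
| "Xf U (Suc n) h = (if n = 0 then 0 else Xf U n h + U n (restrict h {1..<n}) + h n)"

lemma Xf_restrict: "q \<le> s \<Longrightarrow> Xf U q (restrict h {1..<s}) = Xf U q h"
proof (induction q)
  case 0 then show ?case by simp
next
  case (Suc n)
  have r: "restrict (restrict h {1..<s}) {1..<n} = restrict h {1..<n}"
    using Suc.prems by (auto simp: restrict_def fun_eq_iff)
  have ih: "Xf U n (restrict h {1..<s}) = Xf U n h" by (rule Suc.IH) (use Suc.prems in simp)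
  have hn: "n \<noteq> 0 \<Longrightarrow> restrict h {1..<s} n = h n" using Suc.prems by auto
  show ?case
  proof (cases "n = 0")
    case True then show ?thesis by simp
  next
    case False
    show ?thesis by (simp only: Xf.simps r ih hn[OF False] False if_False)
  qed
qed

lemma Xf_meas:
  assumes U: "\<And>n. 1 \<le> n \<Longrightarrow> n < T \<Longrightarrow> U n \<in> PiM {1..<n} (\<lambda>_. borel) \<rightarrow>\<^sub>M borel"
    and "s \<le> T"
  shows "q \<le> s \<Longrightarrow> Xf U q \<in> borel_measurable (PiM {1..<s} (\<lambda>_. borel))"
proof (induction q)
  case 0 then show ?case by simp
next
  case (Suc n)
  show ?case
  proof (cases "n = 0")
    case True then show ?thesis by simp
  next
    case False
    have n: "1 \<le> n" "n < T" "n < s" using False Suc.prems assms(2) by auto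
    have m1: "Xf U n \<in> borel_measurable (PiM {1..<s} (\<lambda>_. borel))" using Suc by simp
    have m2: "(\<lambda>h. U n (restrict h {1..<n})) \<in> borel_measurable (PiM {1..<s} (\<lambda>_. borel))"
      by (rule measurable_compose[OF measurable_restrict_subset U[OF n(1,2)]]) (use n in auto)
    have m3: "(\<lambda>h. h n) \<in> borel_measurable (PiM {1..<s} (\<lambda>_. borel))"
      by (rule measurable_component_singleton) (use n in auto)
    have "(\<lambda>h. Xf U n h + U n (restrict h {1..<n}) + h n) \<in> borel_measurable (PiM {1..<s} (\<lambda>_. borel))"
      using m1 m2 m3 by (intro borel_measurable_add) auto
    then show ?thesis using False by simp
  qed
qed

lemma tc_arith:
  fixes t lL \<sigma> l a d c :: real
  assumes t: "t \<ge> 1" and l1: "lL \<ge> 1" and l_def: "l = lL / t" and a_def: "a = 1 - 2*l*\<sigma>\<^sup>2"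
    and a34: "a \<ge> 3/4" and hs: "8 * \<sigma>\<^sup>2 * lL \<le> 1" and hd: "5 * \<sigma>\<^sup>2 * d * lL * lL \<le> 1"
    and d0: "d \<ge> 0" and c_def: "c = 2*l\<^sup>2*\<sigma>\<^sup>2*(121*t)/a + d*((1/a - 1)/2)"
  shows "t * c \<le> 98 * lL"
proof -
  have a0: "a > 0" using a34 by simp
  have lt: "l * t = lL" unfolding l_def using t by simp
  have e1: "1/a - 1 = 2*l*\<sigma>\<^sup>2/a" unfolding a_def using a0 a_def by (simp add: field_simps)
  have e2: "t * (2*l\<^sup>2*\<sigma>\<^sup>2*(121*t)/a) = 242 * lL\<^sup>2 * \<sigma>\<^sup>2 / a"
    using lt[symmetric] by (simp add: power2_eq_square field_simps)
  have e3: "t * (d*((1/a - 1)/2)) = d * lL * \<sigma>\<^sup>2 / a"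
    unfolding e1 using lt[symmetric] by (simp add: field_simps)
  have "t * c = (242 * lL\<^sup>2 * \<sigma>\<^sup>2 + d * lL * \<sigma>\<^sup>2) / a"
    unfolding c_def distrib_left e2 e3 by (simp add: add_divide_distrib)
  also have "\<dots> \<le> (242 * lL\<^sup>2 * \<sigma>\<^sup>2 + d * lL * \<sigma>\<^sup>2) / (3/4)"
    using a34 l1 d0 by (intro divide_left_mono) auto
  also have "\<dots> \<le> 98 * lL"
  proof -
    have "lL\<^sup>2 * \<sigma>\<^sup>2 = lL * (\<sigma>\<^sup>2 * lL)" by (simp add: power2_eq_square)
    also have "\<dots> \<le> lL * (1/8)" using hs l1 by (intro mult_left_mono) auto
    finally have f1: "lL\<^sup>2 * \<sigma>\<^sup>2 \<le> lL / 8" by simp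
    have "d * lL * \<sigma>\<^sup>2 * (5 * lL) \<le> 1" using hd by (simp add: algebra_simps)
    then have "d * lL * \<sigma>\<^sup>2 \<le> 1 / (5 * lL)" using l1 by (simp add: field_simps)
    also have "\<dots> \<le> 1 / 5" using l1 by (simp add: field_simps)
    finally have f2: "d * lL * \<sigma>\<^sup>2 \<le> lL / 5" using l1 by linarith
    have aux: "\<And>A B x :: real. A \<le> x/8 \<Longrightarrow> B \<le> x/5 \<Longrightarrow> x \<ge> 1 \<Longrightarrow> (242*A + B)/(3/4) \<le> 98*x"
      by (auto simp: field_simps)
    show ?thesis using aux[OF f1 f2 l1] by simp
  qed
  finally show ?thesis .
qed



theorem claim3p11:
  fixes M :: "'w measure"
    and \<eta> :: "nat \<Rightarrow> 'w \<Rightarrow> real ^ 'd"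
    and U :: "nat \<Rightarrow> (nat \<Rightarrow> real ^ 'd) \<Rightarrow> real ^ 'd"
    and u x :: "nat \<Rightarrow> 'w \<Rightarrow> real ^ 'd"
    and T \<tau> :: nat and \<beta> \<sigma> L :: real
  assumes "prob_space M"
    and "T \<ge> 1" and "\<tau> \<ge> 1"
    and "0 < \<beta>" and "\<beta> < 1"
    and L_def: "L = 2 * real T * real \<tau> / \<beta>"
    and "L \<ge> exp 1"
    and "\<sigma> > 0"
    and "\<sigma> * sqrt (2 * ln L) \<le> 1/2"
    and "5 * \<sigma>\<^sup>2 * real CARD('d) * ln L \<le> 1 / ln L"
    and gauss: "\<And>t. 1 \<le> t \<Longrightarrow> t < T \<Longrightarrow>
        distributed M lborel (\<eta> t) (\<lambda>v. ennreal (iso_gauss_density \<sigma> v))"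
    and indep: "\<And>t. 1 \<le> t \<Longrightarrow> t < T \<Longrightarrow>
        prob_space.indep_set M
          (sets (vimage_algebra (space M) (\<eta> t) borel))
          (sets (vimage_algebra (space M) (\<lambda>\<omega>. \<lambda>i\<in>{1..<t}. \<eta> i \<omega>)
                  (PiM {1..<t} (\<lambda>_. borel))))"
    and U_meas: "\<And>t. 1 \<le> t \<Longrightarrow> t < T \<Longrightarrow>
        U t \<in> PiM {1..<t} (\<lambda>_. borel) \<rightarrow>\<^sub>M borel"
    and u_def: "\<And>t \<omega>. 1 \<le> t \<Longrightarrow> t < T \<Longrightarrow> \<omega> \<in> space M \<Longrightarrow>
        u t \<omega> = U t (\<lambda>i\<in>{1..<t}. \<eta> i \<omega>)"
    and x_init: "\<And>\<omega>. \<omega> \<in> space M \<Longrightarrow> x 1 \<omega> = 0"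
    and x_step: "\<And>t \<omega>. 1 \<le> t \<Longrightarrow> t < T \<Longrightarrow> \<omega> \<in> space M \<Longrightarrow>
        x (t + 1) \<omega> = x t \<omega> + u t \<omega> + \<eta> t \<omega>"
    and u_norm: "\<And>t \<omega>. 1 \<le> t \<Longrightarrow> t < T \<Longrightarrow> \<omega> \<in> space M \<Longrightarrow> norm (u t \<omega>) \<le> 1"
    and u_inner: "\<And>t \<omega>. 1 \<le> t \<Longrightarrow> t < T \<Longrightarrow> \<omega> \<in> space M \<Longrightarrow>
        inner (x t \<omega>) (u t \<omega>) \<le> 0"
  shows "measure M {\<omega> \<in> space M. \<forall>t\<in>{1..T}. norm (x t \<omega>) \<le> 10 * sqrt (real t)}
           \<ge> 1 - 2 * \<beta> / real \<tau>"
proof -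
  interpret prob_space M by fact
  define N where "N = density lborel (\<lambda>v. ennreal (iso_gauss_density \<sigma> (v :: real^'d)))"
  define lL where "lL = ln L"
  have L0: "L > 0" using \<open>L \<ge> exp 1\<close> exp_gt_zero[of 1] by linarith
  have l1: "lL \<ge> 1" unfolding lL_def using \<open>L \<ge> exp 1\<close> L0
    by (metis ln_exp ln_le_cancel_iff exp_gt_zero)
  have eta_ml: "\<eta> t \<in> M \<rightarrow>\<^sub>M lborel" if "1 \<le> t" "t < T" for t
    using distributed_measurable[OF gauss[OF that]] .
  have eta_m: "\<eta> t \<in> borel_measurable M" if "1 \<le> t" "t < T" for t
    using eta_ml[OF that] by simp
  have eta_d: "distr M lborel (\<eta> t) = N" if "1 \<le> t" "t < T" for t
    unfolding N_def using distributed_distr_eq_density[OF gauss[OF that]] .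
  define Eta where "Eta \<omega> = (\<lambda>i. \<eta> i \<omega>)" for \<omega>
  have H_m: "(\<lambda>\<omega>. restrict (Eta \<omega>) {1..<s}) \<in> M \<rightarrow>\<^sub>M PiM {1..<s} (\<lambda>_. borel)" if "s \<le> T" for s
    unfolding Eta_def by (intro measurable_restrict) (use eta_m that in auto)
  have x_eq: "x t \<omega> = Xf U t (Eta \<omega>)" if "\<omega> \<in> space M" "1 \<le> t" "t \<le> T" for t \<omega>
    using that(2,3)
  proof (induction t rule: dec_induct)
    case base then show ?case using x_init[OF that(1)] by simp
  next
    case (step n)
    have "x (Suc n) \<omega> = x n \<omega> + u n \<omega> + \<eta> n \<omega>"
      using x_step[of n \<omega>] step that by simp
    also have "\<dots> = Xf U (Suc n) (Eta \<omega>)"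
      using step u_def[of n \<omega>] that by (simp add: Eta_def)
    finally show ?case .
  qed
  have xm: "x q \<in> borel_measurable M" if "1 \<le> q" "q \<le> T" for q
  proof -
    have m: "(\<lambda>\<omega>. Xf U q (restrict (Eta \<omega>) {1..<T})) \<in> borel_measurable M"
      using measurable_compose[OF H_m[OF le_refl] Xf_meas[OF U_meas le_refl that(2)]] .
    show ?thesis
    proof (subst measurable_cong)
      show "x q w = Xf U q (restrict (Eta w) {1..<T})" if "w \<in> space M" for w
        by (simp only: x_eq[OF that \<open>1 \<le> q\<close> \<open>q \<le> T\<close>] Xf_restrict[OF \<open>q \<le> T\<close>])
    qed (rule m)
  qed
  have lev: "{\<omega>\<in>space M. norm (x q \<omega>) \<le> 10 * sqrt q} \<in> sets M" if "1 \<le> q" "q \<le> T" for q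
  proof -
    note [measurable] = xm[OF that]
    show ?thesis by measurable
  qed
  have gtv: "{\<omega>\<in>space M. 10 * sqrt q < norm (x q \<omega>)} \<in> sets M" if "1 \<le> q" "q \<le> T" for q
  proof -
    note [measurable] = xm[OF that]
    show ?thesis by measurable
  qed
  define E where "E t = {\<omega>\<in>space M. (\<forall>q\<in>{1..<t}. norm (x q \<omega>) \<le> 10 * sqrt q) \<and> 10 * sqrt t < norm (x t \<omega>)}" for t
  have Em: "E t \<in> sets M" if "2 \<le> t" "t \<le> T" for t
  proof -
    have "E t = (\<Inter>q\<in>{1..<t}. {\<omega>\<in>space M. norm (x q \<omega>) \<le> 10 * sqrt q}) \<inter> {\<omega>\<in>space M. 10 * sqrt t < norm (x t \<omega>)}"
      using that unfolding E_def by auto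
    also have "\<dots> \<in> sets M"
      using that by (intro sets.Int sets.finite_INT lev gtv) auto
    finally show ?thesis .
  qed
  define S where "S = {\<omega> \<in> space M. \<forall>t\<in>{1..T}. norm (x t \<omega>) \<le> 10 * sqrt (real t)}"
  have Sm: "S \<in> sets M"
  proof -
    have "S = (\<Inter>q\<in>{1..T}. {\<omega>\<in>space M. norm (x q \<omega>) \<le> 10 * sqrt q})"
      using \<open>T \<ge> 1\<close> unfolding S_def by auto
    also have "\<dots> \<in> sets M"
      using \<open>T \<ge> 1\<close> by (intro sets.finite_INT lev) auto
    finally show ?thesis .
  qed
  have sub: "space M - S \<subseteq> (\<Union>t\<in>{2..T}. E t)"
  proof
    fix \<omega> assume w: "\<omega> \<in> space M - S"
    define P where "P t \<longleftrightarrow> t \<in> {1..T} \<and> \<not> norm (x t \<omega>) \<le> 10 * sqrt (real t)" for t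
    have ex: "\<exists>t. P t" using w unfolding S_def P_def by auto
    define t0 where "t0 = (LEAST t. P t)"
    have P0: "P t0" unfolding t0_def using ex by (rule LeastI_ex)
    have min: "\<not> P q" if "q < t0" for q using not_less_Least[of q P] that unfolding t0_def by blast
    have "t0 \<noteq> 1" using P0 x_init w unfolding P_def by auto
    then have t2: "2 \<le> t0" "t0 \<le> T" using P0 unfolding P_def by auto
    have "\<omega> \<in> E t0" unfolding E_def using w P0 min t2 unfolding P_def by auto
    then show "\<omega> \<in> (\<Union>t\<in>{2..T}. E t)" using t2 by auto
  qed
  define good where "good g r \<longleftrightarrow> (\<forall>q\<in>{1..r}. norm (Xf U q g) \<le> 10 * sqrt (real q))" for g r
  define Vf where "Vf g r = Xf U r g + U r (restrict g {1..<r})" for g r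
  have good_r: "good (restrict h {1..<s}) r = good h r" if "r \<le> s" for h r s
    unfolding good_def using Xf_restrict[of _ s U h] that by auto
  have Vf_r: "Vf (restrict h {1..<s}) r = Vf h r" if "r \<le> s" for h r s
  proof -
    have "restrict (restrict h {1..<s}) {1..<r} = restrict h {1..<r}"
      using that by (auto simp: restrict_def fun_eq_iff)
    then show ?thesis unfolding Vf_def using Xf_restrict[OF that] by simp
  qed
  have Xm: "Xf U q \<in> borel_measurable (PiM {1..<s} (\<lambda>_. borel :: (real^'d) measure))" if "q \<le> s" "s \<le> T" for q s
    using Xf_meas[OF U_meas that(2,1)] .
  have goodm: "(\<lambda>g. good g r) \<in> measurable (PiM {1..<s} (\<lambda>_. borel :: (real^'d) measure)) (count_space (UNIV::bool set))" if "r \<le> s" "s \<le> T" for r s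
    unfolding good_def
  proof (intro pred_intros_finite(3))
    fix q assume q: "q \<in> {1..r}"
    have qs: "q \<le> s" using q that by auto
    note [measurable] = Xm[OF qs that(2)]
    show "(\<lambda>g. norm (Xf U q g) \<le> 10 * sqrt (real q)) \<in> measurable (PiM {1..<s} (\<lambda>_. borel :: (real^'d) measure)) (count_space (UNIV::bool set))"
      using q that by measurable
  qed simp
  have Vm: "(\<lambda>g. Vf g r) \<in> borel_measurable (PiM {1..<s} (\<lambda>_. borel :: (real^'d) measure))"
    if "1 \<le> r" "r \<le> s" "r < T" "s \<le> T" for r s
  proof -
    have "(\<lambda>g. U r (restrict g {1..<r})) \<in> borel_measurable (PiM {1..<s} (\<lambda>_. borel :: (real^'d) measure))"
      by (rule measurable_compose[OF measurable_restrict_subset U_meas[OF that(1,3)]]) (use that in auto)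
    then show ?thesis unfolding Vf_def using Xm[OF that(2,4)] by (intro borel_measurable_add) auto
  qed
  have hs: "8 * \<sigma>\<^sup>2 * lL \<le> 1"
  proof -
    have "(\<sigma> * sqrt (2 * lL))\<^sup>2 \<le> (1/2)\<^sup>2"
      using \<open>\<sigma> * sqrt (2 * ln L) \<le> 1/2\<close> \<open>\<sigma> > 0\<close> l1 unfolding lL_def
      by (intro power_mono) auto
    moreover have "(\<sigma> * sqrt (2 * lL))\<^sup>2 = 2 * (\<sigma>\<^sup>2 * lL)"
      using l1 by (simp add: power_mult_distrib)
    moreover have "(1/2::real)\<^sup>2 = 1/4" by (simp add: power2_eq_square)
    ultimately show ?thesis by linarith
  qed
  have hd: "5 * \<sigma>\<^sup>2 * real CARD('d) * lL * lL \<le> 1"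
    using \<open>5 * \<sigma>\<^sup>2 * real CARD('d) * ln L \<le> 1 / ln L\<close> l1 unfolding lL_def
    by (simp add: field_simps)
  have tele: "(norm (x k \<omega>))\<^sup>2 \<le> real (k - 1) + (\<Sum>r\<in>{1..<k}. (norm (\<eta> r \<omega>))\<^sup>2 + 2 * ((x r \<omega> + u r \<omega>) \<bullet> \<eta> r \<omega>))"
    if w: "\<omega> \<in> space M" and k: "1 \<le> k" "k \<le> T" for k \<omega>
    using k
  proof (induction k rule: dec_induct)
    case base then show ?case using x_init[OF w] by simp
  next
    case (step k)
    have k: "1 \<le> k" "k < T" using step by auto
    have sq: "(norm (a + b + e))\<^sup>2 = (norm a)\<^sup>2 + (norm b)\<^sup>2 + (norm e)\<^sup>2 + 2 * (a \<bullet> b) + 2 * ((a + b) \<bullet> e)"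
      for a b e :: "real^'d"
      by (simp add: power2_norm_eq_inner inner_add_left inner_add_right inner_commute algebra_simps)
    have u1: "(norm (u k \<omega>))\<^sup>2 \<le> 1" using u_norm[OF k w] by (simp add: power_le_one)
    have "(norm (x (Suc k) \<omega>))\<^sup>2 = (norm (x k \<omega> + u k \<omega> + \<eta> k \<omega>))\<^sup>2"
      using x_step[OF k w] by simp
    also have "\<dots> \<le> (norm (x k \<omega>))\<^sup>2 + 1 + ((norm (\<eta> k \<omega>))\<^sup>2 + 2 * ((x k \<omega> + u k \<omega>) \<bullet> \<eta> k \<omega>))"
      unfolding sq using u1 u_inner[OF k w] by simp
    also have "\<dots> \<le> real (Suc k - 1) + (\<Sum>r\<in>{1..<Suc k}. (norm (\<eta> r \<omega>))\<^sup>2 + 2 * ((x r \<omega> + u r \<omega>) \<bullet> \<eta> r \<omega>))"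
      using step.IH k by (simp add: atLeastLessThanSuc)
    finally show ?case .
  qed
  have Ebound: "measure M (E t) \<le> 1 / L" if t: "2 \<le> t" "t \<le> T" for t
  proof -
    define l where "l = lL / t"
    define a where "a = 1 - 2*l*\<sigma>\<^sup>2"
    define d where "d = real CARD('d)"
    define c where "c = 2*l\<^sup>2*\<sigma>\<^sup>2*(121*t)/a + d*((1/a - 1)/2)"
    have l0: "l > 0" unfolding l_def using l1 t by simp
    have lt: "l * t = lL" unfolding l_def using t by simp
    have "l \<le> lL" unfolding l_def using l1 t by (simp add: divide_le_eq)
    then have "l*\<sigma>\<^sup>2 \<le> lL*\<sigma>\<^sup>2" by (intro mult_right_mono) auto
    moreover have "2*l*\<sigma>\<^sup>2 = 2*(l*\<sigma>\<^sup>2)" "8 * \<sigma>\<^sup>2 * lL = 8*(lL*\<sigma>\<^sup>2)" by (simp_all add: algebra_simps)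
    ultimately have "2*l*\<sigma>\<^sup>2 \<le> 1/4" using hs by linarith
    then have a34: "a \<ge> 3/4" and a1: "a \<le> 1" unfolding a_def using l0 by auto
    have a0: "a > 0" using a34 by simp
    have "1/a \<ge> 1" using a0 a1 by (simp add: field_simps)
    then have c0: "c \<ge> 0" unfolding c_def d_def using a0
      by (intro add_nonneg_nonneg divide_nonneg_pos mult_nonneg_nonneg) auto
    have tc: "t * c \<le> 98 * lL"
      by (rule tc_arith[of "real t" lL l a \<sigma> d c]) (use t l1 a34 hs hd in \<open>auto simp: l_def a_def d_def c_def\<close>)
    define Dr where "Dr g r = (if good g r then l * ((norm (g r))\<^sup>2 + 2 * (Vf g r \<bullet> g r)) else 0)"
      for g :: "nat \<Rightarrow> real^'d" and r
    define Z where "Z s g = exp (\<Sum>r\<in>{1..<s}. (Dr g r - c))" for s g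
    have Dr_r: "Dr (restrict h {1..<s}) r = Dr h r" if "1 \<le> r" "r < s" for h r s
      unfolding Dr_def using good_r[of r s h] Vf_r[of r s h] that by simp
    have Z_r: "Z s (restrict h {1..<s}) = Z s h" for h s
      unfolding Z_def by (intro arg_cong[where f=exp] sum.cong refl arg_cong2[where f=minus] Dr_r) auto
    have Zsuc: "Z (Suc n) h = Z n h * exp (Dr h n - c)" if "1 \<le> n" for n h
      unfolding Z_def using that by (simp add: atLeastLessThanSuc exp_add)
    have Drm: "(\<lambda>g. Dr g r) \<in> borel_measurable (PiM {1..<s} (\<lambda>_. borel :: (real^'d) measure))"
      if "1 \<le> r" "r < s" "s \<le> T" for r s
    proof -
      have rs: "r \<le> s" "r < T" using that by auto
      note [measurable] = goodm[OF rs(1) that(3)] Vm[OF that(1) rs that(3)]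
      have [measurable]: "(\<lambda>g. g r) \<in> borel_measurable (PiM {1..<s} (\<lambda>_. borel :: (real^'d) measure))"
        by (rule measurable_component_singleton) (use that in auto)
      show ?thesis unfolding Dr_def using that by measurable
    qed
    have Zm: "Z s \<in> borel_measurable (PiM {1..<s} (\<lambda>_. borel :: (real^'d) measure))" if "s \<le> T" for s
    proof -
      have "(\<lambda>g. \<Sum>r\<in>{1..<s}. (Dr g r - c)) \<in> borel_measurable (PiM {1..<s} (\<lambda>_. borel :: (real^'d) measure))"
        using Drm that by (intro borel_measurable_sum borel_measurable_diff) auto
      then show ?thesis unfolding Z_def by (rule measurable_compose[OF _ borel_measurable_exp])
    qed
    have Zint: "(\<integral>\<^sup>+\<omega>. ennreal (Z s (Eta \<omega>)) \<partial>M) \<le> 1" if s: "1 \<le> s" "s \<le> t" for s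
      using s(1)
    proof (induction s rule: dec_induct)
      case base
      have "Z 1 h = 1" for h unfolding Z_def by simp
      then show ?case by (simp add: emeasure_space_1)
    next
      case (step n)
      have n: "1 \<le> n" "n < T" "n < t" using step s t by auto
      define P where "P = PiM {1..<n} (\<lambda>_. borel :: (real^'d) measure)"
      define G where "G g y = (if good g n then l * ((norm y)\<^sup>2 + 2 * (Vf g n \<bullet> y)) else 0)" for g y
      define F where "F = (\<lambda>(g, y). ennreal (Z n g * exp (G g y - c)))"
      have eq1: "Z (Suc n) (Eta \<omega>) = Z n (restrict (Eta \<omega>) {1..<n}) * exp (G (restrict (Eta \<omega>) {1..<n}) (\<eta> n \<omega>) - c)" for \<omega>
        unfolding Zsuc[OF n(1)] Z_r G_def Dr_def using good_r[of n n "Eta \<omega>"] Vf_r[of n n "Eta \<omega>"]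
        by (simp add: Eta_def)
      have Fm: "F \<in> borel_measurable (P \<Otimes>\<^sub>M lborel)"
      proof -
        have nn: "n \<le> n" "n \<le> T" using n by auto
        note [measurable] = Zm[OF nn(2)] goodm[OF nn] Vm[OF n(1) nn(1) n(2) nn(2)]
        show ?thesis unfolding F_def G_def P_def by measurable
      qed
      have ind': "indep_set (sets (vimage_algebra (space M) (\<eta> n) borel))
          (sets (vimage_algebra (space M) (\<lambda>\<omega>. restrict (Eta \<omega>) {1..<n}) P))"
        using indep[OF n(1,2)] unfolding Eta_def P_def .
      have Hm': "(\<lambda>\<omega>. restrict (Eta \<omega>) {1..<n}) \<in> M \<rightarrow>\<^sub>M P"
        unfolding P_def using H_m n by simp
      have Nps: "prob_space N" using prob_space_distr[OF eta_ml[OF n(1,2)]] eta_d[OF n(1,2)] by simp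
      have inner1: "(\<integral>\<^sup>+y. ennreal (exp (G g y - c)) \<partial>N) \<le> 1"
        if w: "\<omega> \<in> space M" and g: "g = restrict (Eta \<omega>) {1..<n}" for \<omega> g
      proof (cases "good g n")
        case True
        define v where "v = Vf g n"
        have rg: "restrict g {1..<n} = (\<lambda>i\<in>{1..<n}. \<eta> i \<omega>)"
          unfolding g Eta_def by (auto simp: fun_eq_iff restrict_def)
        have Ug: "U n (restrict g {1..<n}) = u n \<omega>" unfolding rg using u_def[OF n(1,2) w] by simp
        have xn: "norm (Xf U n g) \<le> 10 * sqrt n" using True n(1) unfolding good_def by auto
        have "norm v \<le> norm (Xf U n g) + norm (u n \<omega>)"
          unfolding v_def Vf_def Ug by (rule norm_triangle_ineq)
        also have "\<dots> \<le> 10 * sqrt n + 1" using xn u_norm[OF n(1,2) w] by simp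
        also have "\<dots> \<le> 11 * sqrt t"
        proof -
          have "sqrt n \<le> sqrt t" using n by simp
          moreover have "1 \<le> sqrt t" using t by simp
          ultimately show ?thesis by linarith
        qed
        finally have vn: "norm v \<le> 11 * sqrt t" .
        have vB: "(norm v)\<^sup>2 \<le> 121 * real t"
        proof -
          have "(norm v)\<^sup>2 \<le> (11 * sqrt t)\<^sup>2" using vn by (intro power_mono) auto
          then show ?thesis by (simp add: power_mult_distrib)
        qed
        have Geq: "exp (G g y - c) = exp (-c) * exp (l*(norm y)\<^sup>2 + 2*l*(v \<bullet> y))" for y
          unfolding G_def v_def using True by (simp add: exp_add[symmetric] algebra_simps)
        have m2: "(\<lambda>y. ennreal (exp (l*(norm y)\<^sup>2 + 2*l*(v \<bullet> y)))) \<in> borel_measurable N"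
          unfolding N_def by measurable
        have "(\<integral>\<^sup>+y. ennreal (exp (G g y - c)) \<partial>N) = (\<integral>\<^sup>+y. ennreal (exp (-c)) * ennreal (exp (l*(norm y)\<^sup>2 + 2*l*(v \<bullet> y))) \<partial>N)"
          unfolding Geq by (simp add: ennreal_mult)
        also have "\<dots> = ennreal (exp (-c)) * (\<integral>\<^sup>+y. ennreal (exp (l*(norm y)\<^sup>2 + 2*l*(v \<bullet> y))) \<partial>N)"
          by (rule nn_integral_cmult[OF m2])
        also have "\<dots> \<le> ennreal (exp (-c)) * ennreal (exp c)"
        proof (intro mult_left_mono)
          have "(\<integral>\<^sup>+y. ennreal (exp (l*(norm y)\<^sup>2 + 2*l*(v \<bullet> y))) \<partial>N)
              \<le> ennreal (exp (2*l\<^sup>2*\<sigma>\<^sup>2*(121 * real t)/a + real CARD('d) * ((1/a - 1)/2)))"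
            unfolding N_def by (rule gauss_bound[OF \<open>\<sigma> > 0\<close> a_def a0 vB])
          then show "(\<integral>\<^sup>+y. ennreal (exp (l*(norm y)\<^sup>2 + 2*l*(v \<bullet> y))) \<partial>N) \<le> ennreal (exp c)"
            by (simp add: c_def d_def)
        qed simp
        also have "\<dots> = 1" by (simp add: ennreal_mult[symmetric] exp_add[symmetric])
        finally show ?thesis .
      next
        case False
        then have "(\<integral>\<^sup>+y. ennreal (exp (G g y - c)) \<partial>N) = ennreal (exp (-c)) * emeasure N (space N)"
          unfolding G_def by simp
        also have "\<dots> = ennreal (exp (-c))" using prob_space.emeasure_space_1[OF Nps] by simp
        also have "\<dots> \<le> 1" using c0 by simp
        finally show ?thesis .
      qed
      have "(\<integral>\<^sup>+\<omega>. ennreal (Z (Suc n) (Eta \<omega>)) \<partial>M) = (\<integral>\<^sup>+\<omega>. F (restrict (Eta \<omega>) {1..<n}, \<eta> n \<omega>) \<partial>M)"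
        by (simp add: eq1 F_def)
      also have "\<dots> = (\<integral>\<^sup>+\<omega>. (\<integral>\<^sup>+y. F (restrict (Eta \<omega>) {1..<n}, y) \<partial>distr M lborel (\<eta> n)) \<partial>M)"
        by (rule factor[OF prob_space_axioms ind' eta_m[OF n(1,2)] Hm' Fm])
      also have "\<dots> \<le> (\<integral>\<^sup>+\<omega>. ennreal (Z n (restrict (Eta \<omega>) {1..<n})) \<partial>M)"
      proof (rule nn_integral_mono)
        fix \<omega> assume w: "\<omega> \<in> space M"
        define g where "g = restrict (Eta \<omega>) {1..<n}"
        have Gm: "(\<lambda>y. ennreal (exp (G g y - c))) \<in> borel_measurable N"
          unfolding N_def G_def by measurable
        have "(\<integral>\<^sup>+y. F (g, y) \<partial>distr M lborel (\<eta> n)) = (\<integral>\<^sup>+y. ennreal (Z n g) * ennreal (exp (G g y - c)) \<partial>N)"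
          unfolding F_def eta_d[OF n(1,2)] by (simp add: ennreal_mult Z_def)
        also have "\<dots> = ennreal (Z n g) * (\<integral>\<^sup>+y. ennreal (exp (G g y - c)) \<partial>N)"
          by (rule nn_integral_cmult[OF Gm])
        also have "\<dots> \<le> ennreal (Z n g) * 1"
          by (intro mult_left_mono inner1[OF w g_def]) auto
        finally show "(\<integral>\<^sup>+y. F (restrict (Eta \<omega>) {1..<n}, y) \<partial>distr M lborel (\<eta> n)) \<le> ennreal (Z n (restrict (Eta \<omega>) {1..<n}))"
          unfolding g_def by simp
      qed
      also have "\<dots> = (\<integral>\<^sup>+\<omega>. ennreal (Z n (Eta \<omega>)) \<partial>M)" by (simp only: Z_r)
      also have "\<dots> \<le> 1" by (rule step.IH)
      finally show ?case .
    qed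
    have lowZ: "L \<le> Z t (Eta \<omega>)" if "\<omega> \<in> E t" for \<omega>
    proof -
      have w: "\<omega> \<in> space M" and hq: "\<forall>q\<in>{1..<t}. norm (x q \<omega>) \<le> 10 * sqrt q"
        and big: "10 * sqrt t < norm (x t \<omega>)" using that unfolding E_def by auto
      have Dr_eq: "Dr (Eta \<omega>) r = l * ((norm (\<eta> r \<omega>))\<^sup>2 + 2 * ((x r \<omega> + u r \<omega>) \<bullet> \<eta> r \<omega>))"
        if r: "r \<in> {1..<t}" for r
      proof -
        have rT: "1 \<le> r" "r < T" using r t by auto
        have "good (Eta \<omega>) r" unfolding good_def
        proof
          fix q assume q: "q \<in> {1..r}"
          then have "x q \<omega> = Xf U q (Eta \<omega>)" using x_eq[OF w] rT by auto
          moreover have "norm (x q \<omega>) \<le> 10 * sqrt q" using hq q r by auto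
          ultimately show "norm (Xf U q (Eta \<omega>)) \<le> 10 * sqrt q" by simp
        qed
        moreover have "Vf (Eta \<omega>) r = x r \<omega> + u r \<omega>"
          unfolding Vf_def using x_eq[OF w rT(1)] u_def[OF rT w] rT by (simp add: Eta_def)
        ultimately show ?thesis unfolding Dr_def by (simp add: Eta_def)
      qed
      define Sm where "Sm = (\<Sum>r\<in>{1..<t}. (norm (\<eta> r \<omega>))\<^sup>2 + 2 * ((x r \<omega> + u r \<omega>) \<bullet> \<eta> r \<omega>))"
      have "(\<Sum>r\<in>{1..<t}. (Dr (Eta \<omega>) r - c)) = (\<Sum>r\<in>{1..<t}. l * ((norm (\<eta> r \<omega>))\<^sup>2 + 2 * ((x r \<omega> + u r \<omega>) \<bullet> \<eta> r \<omega>)) - c)"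
        using Dr_eq by (intro sum.cong) auto
      also have "\<dots> = l * Sm - real (t - 1) * c"
        unfolding Sm_def by (simp add: sum_subtractf sum_distrib_left)
      finally have sumeq: "(\<Sum>r\<in>{1..<t}. (Dr (Eta \<omega>) r - c)) = l * Sm - real (t - 1) * c" .
      have te: "(norm (x t \<omega>))\<^sup>2 \<le> real (t - 1) + Sm" using tele[OF w _ t(2)] t unfolding Sm_def by simp
      have "(10 * sqrt t)\<^sup>2 < (norm (x t \<omega>))\<^sup>2" using big by (intro power_strict_mono) auto
      then have big2: "100 * real t < (norm (x t \<omega>))\<^sup>2" by (simp add: power_mult_distrib)
      have Sm99: "99 * real t \<le> Sm" using te big2 t by (simp add: of_nat_diff)
      have "lL \<le> 99 * lL - t * c" using tc by simp
      also have "99 * lL = l * (99 * real t)" using lt by simp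
      also have "l * (99 * real t) \<le> l * Sm" using Sm99 l0 by (intro mult_left_mono) auto
      also have "real t * c \<ge> real (t - 1) * c" using c0 by (intro mult_right_mono) auto
      then have "l * Sm - real t * c \<le> l * Sm - real (t - 1) * c" by simp
      finally have "lL \<le> (\<Sum>r\<in>{1..<t}. (Dr (Eta \<omega>) r - c))" unfolding sumeq by simp
      then have "exp lL \<le> Z t (Eta \<omega>)" unfolding Z_def by simp
      then show ?thesis unfolding lL_def using L0 by simp
    qed
    have "ennreal L * emeasure M (E t) = (\<integral>\<^sup>+\<omega>. ennreal L * indicator (E t) \<omega> \<partial>M)"
      using Em[OF t] by (simp add: nn_integral_cmult_indicator)
    also have "\<dots> \<le> (\<integral>\<^sup>+\<omega>. ennreal (Z t (Eta \<omega>)) \<partial>M)"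
      by (intro nn_integral_mono) (auto split: split_indicator intro!: ennreal_leI lowZ)
    also have "\<dots> \<le> 1" using Zint t by simp
    finally have "ennreal L * emeasure M (E t) \<le> 1" .
    then have "ennreal (L * measure M (E t)) \<le> 1"
      using L0 by (simp add: emeasure_eq_measure ennreal_mult)
    then have "L * measure M (E t) \<le> 1" by (simp add: ennreal_le_1)
    then show ?thesis using L0 by (simp add: field_simps)
  qed
  have "prob (space M - S) \<le> prob (\<Union>t\<in>{2..T}. E t)"
    using sub Em by (intro finite_measure_mono) (auto intro!: sets.finite_UN)
  also have "\<dots> \<le> (\<Sum>t\<in>{2..T}. prob (E t))"
    using Em by (intro finite_measure_subadditive_finite) auto
  also have "\<dots> \<le> (\<Sum>t\<in>{2..T}. 1 / L)"
    using Ebound by (intro sum_mono) auto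
  also have "\<dots> \<le> real T / L"
    using L0 by (simp add: divide_right_mono)
  finally have c: "prob (space M - S) \<le> real T / L" .
  have "2 * \<beta> / real \<tau> = 4 * real T / L"
    using \<open>0 < \<beta>\<close> \<open>\<tau> \<ge> 1\<close> \<open>T \<ge> 1\<close> unfolding L_def by (simp add: field_simps)
  moreover have "real T / L \<le> 4 * real T / L" using L0 by (simp add: divide_right_mono)
  moreover have "prob S = 1 - prob (space M - S)" using prob_compl[OF Sm] by simp
  ultimately show ?thesis using c unfolding S_def by linarith
qed

end
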